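(* Let $A$ be a finite set with $|A|\ge 2$ and $n\ge 2$. Then $\mathrm{Alt}(A^n)$ is not fast: there exists $g\in\mathrm{Alt}(A^n)$ with $\mathcal{L}(g,\mathrm{Alt}(A^n)\cap\mathcal{I})\ne\mathcal{L}(g,\mathcal{I})$.
   Context: Any $f\in\mathrm{Sym}(A^n)$ is written $f(x)=(f_1(x),\ldots,f_n(x))$ with coordinate functions $f_i:A^n\to A$; the $i$-th coordinate function is trivial if $f_i(x)=x_i$ for all $x$. An instruction is a permutation of $A^n$ with at most one nontrivial coordinate function (the identity counts as an instruction); $\mathcal{I}$ denotes the set of all instructions. For a set $\mathcal{J}\subseteq\mathcal{I}$ and $g\in\mathrm{Sym}(A^n)$, $\mathcal{L}(g,\mathcal{J})$ is the smallest $L$ such that $g=g^{(L)}\circ\cdots\circ g^{(1)}$ with all $g^{(k)}\in\mathcal{J}$ (taken to be $\infty$ if no such expression exists). A subgroup $K\le\mathrm{Sym}(A^n)$ is called fast if $\mathcal{L}(g,K\cap\mathcal{I})=\mathcal{L}(g,\mathcal{I})$ for all $g\in K$. *)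

theory Defs
  imports "HOL-Combinatorics.Permutations" "HOL-Library.Extended_Nat"
begin

text \<open>A^n, represented as the lists of length n with entries in A.\<close>
definition cube :: "'a set \<Rightarrow> nat \<Rightarrow> 'a list set" where
  "cube A n = {x. length x = n \<and> set x \<subseteq> A}"

definition instructions :: "'a set \<Rightarrow> nat \<Rightarrow> ('a list \<Rightarrow> 'a list) set" where
  "instructions A n = {f. f permutes cube A n \<and>
     (\<exists>i<n. \<forall>x\<in>cube A n. \<forall>j<n. j \<noteq> i \<longrightarrow> f x ! j = x ! j)}"

definition alt_group :: "'a set \<Rightarrow> nat \<Rightarrow> ('a list \<Rightarrow> 'a list) set" where
  "alt_group A n = {f. f permutes cube A n \<and> evenperm f}"

text \<open>L(g,J): least length of a composition of elements of J equal to g (infinity if none).\<close>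
definition prog_len :: "('b \<Rightarrow> 'b) \<Rightarrow> ('b \<Rightarrow> 'b) set \<Rightarrow> enat" where
  "prog_len g J = Inf {enat (length gs) | gs. set gs \<subseteq> J \<and> foldr (\<circ>) gs id = g}"

end

theory Submission
  imports Defs
begin

lemma only_coord_eq:
  assumes h1: "h1 permutes cube A n" and h2: "h2 permutes cube A n"
    and o1: "\<forall>x\<in>cube A n. \<forall>k<n. k \<noteq> i \<longrightarrow> h1 x ! k = x ! k"
    and o2: "\<forall>x\<in>cube A n. \<forall>k<n. k \<noteq> j \<longrightarrow> h2 x ! k = x ! k"
    and ij: "i \<noteq> j" and x: "x \<in> cube A n"
  shows "h1 x = x[i := h2 (h1 x) ! i]"
proof -
  have hx: "h1 x \<in> cube A n" using permutes_in_image[OF h1] x by blast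
  have lx: "length x = n" using x by (simp add: cube_def)
  have lh: "length (h1 x) = n" using hx by (simp add: cube_def)
  show ?thesis
  proof (rule nth_equalityI)
    show "length (h1 x) = length (x[i := h2 (h1 x) ! i])" using lx lh by simp
  next
    fix k assume k: "k < length (h1 x)"
    show "h1 x ! k = x[i := h2 (h1 x) ! i] ! k"
    proof (cases "k = i")
      case True
      then show ?thesis using o2 hx k lh lx ij by auto
    next
      case False
      then show ?thesis using o1 x k lh by auto
    qed
  qed
qed

theorem proposition3:
  fixes A :: "'a set" and n :: nat
  assumes "finite A" and "card A \<ge> 2" and "n \<ge> 2"
  shows "\<exists>g\<in>alt_group A n.
           prog_len g (alt_group A n \<inter> instructions A n) \<noteq> prog_len g (instructions A n)"
proof -
  obtain a b where ab: "a \<in> A" "b \<in> A" "a \<noteq> b"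
  proof -
    have "\<not> A \<subseteq> {SOME a. a \<in> A}"
    proof
      assume "A \<subseteq> {SOME a. a \<in> A}"
      then have "card A \<le> card {SOME a. a \<in> A}" by (intro card_mono) auto
      then have "card A \<le> 1" by simp
      with assms show False by simp
    qed
    then obtain b where b: "b \<in> A" "b \<noteq> (SOME a. a \<in> A)" by blast
    then have "(SOME a. a \<in> A) \<in> A" by (meson someI)
    with b that show ?thesis by blast
  qed
  define C where "C = cube A n"
  define p where "p = replicate n a"
  define q where "q = p[1 := b]"
  define r where "r = p[0 := b]"
  define s where "s = p[0 := b, 1 := b]"
  have n0: "0 < n" and n1: "1 < n" using assms by auto
  have inC: "p \<in> C" "q \<in> C" "r \<in> C" "s \<in> C"
    using ab unfolding C_def cube_def p_def q_def r_def s_def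
    by (auto dest!: set_update_subset_insert[THEN subsetD])
  have nth: "p!0 = a" "p!1 = a" "q!0 = a" "q!1 = b" "r!0 = b" "r!1 = a" "s!0 = b" "s!1 = b"
    using n0 n1 unfolding p_def q_def r_def s_def by auto
  have dist: "p \<noteq> q" "p \<noteq> r" "q \<noteq> r" "q \<noteq> s" "r \<noteq> s" "p \<noteq> s"
    using nth ab by metis+
  define t1 where "t1 = transpose p r"
  define t2 where "t2 = transpose p q"
  define g where "g = t1 \<circ> t2"
  have gp: "g p = q" and gq: "g q = r" and gr: "g r = p" and gsS: "g s = s"
    using dist unfolding g_def t1_def t2_def by (auto simp: transpose_def)
  have gother: "g x = x" if "x \<noteq> p" "x \<noteq> q" "x \<noteq> r" for x
    using that unfolding g_def t1_def t2_def by (auto simp: transpose_def)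
  have finC: "finite C"
  proof -
    have "C \<subseteq> {xs. set xs \<subseteq> A \<and> length xs = n}" unfolding C_def cube_def by auto
    then show ?thesis using finite_lists_length_eq[OF assms(1)] finite_subset by blast
  qed
  have t1p: "t1 permutes C" and t2p: "t2 permutes C"
    unfolding t1_def t2_def using inC by (auto intro: permutes_swap_id)
  have gperm: "g permutes C" unfolding g_def using permutes_compose[OF t2p t1p] .
  have geven: "evenperm g"
    unfolding g_def t1_def t2_def
    by (simp add: evenperm_comp permutation_swap_id evenperm_swap dist)
  have galt: "g \<in> alt_group A n" using gperm geven unfolding alt_group_def C_def by simp
  have notonly: False if "\<forall>x\<in>C. \<forall>k<n. k \<noteq> j \<longrightarrow> g x ! k = x ! k" for j
  proof -
    have "j = 1"
    proof (rule ccontr)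
      assume "j \<noteq> 1"
      then have "g p ! 1 = p ! 1" using that inC n1 by blast
      then show False using gp nth ab(3) by simp
    qed
    moreover have "j = 0"
    proof (rule ccontr)
      assume "j \<noteq> 0"
      then have "g q ! 0 = q ! 0" using that inC n0 by blast
      then show False using gq nth ab(3) by simp
    qed
    ultimately show False by simp
  qed
  have t2i: "t2 \<in> instructions A n"
    unfolding instructions_def
  proof (intro CollectI conjI exI[of _ 1])
    show "t2 permutes cube A n" using t2p C_def by simp
    show "1 < n" by (rule n1)
    show "\<forall>x\<in>cube A n. \<forall>j<n. j \<noteq> 1 \<longrightarrow> t2 x ! j = x ! j"
      unfolding t2_def q_def by (auto simp: transpose_def)
  qed
  have t1i: "t1 \<in> instructions A n"
    unfolding instructions_def
  proof (intro CollectI conjI exI[of _ 0])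
    show "t1 permutes cube A n" using t1p C_def by simp
    show "0 < n" by (rule n0)
    show "\<forall>x\<in>cube A n. \<forall>j<n. j \<noteq> 0 \<longrightarrow> t1 x ! j = x ! j"
      unfolding t1_def r_def by (auto simp: transpose_def)
  qed
  have le2: "prog_len g (instructions A n) \<le> 2"
  proof -
    have "enat (length [t1, t2]) \<in> {enat (length gs) | gs. set gs \<subseteq> instructions A n \<and> foldr (\<circ>) gs id = g}"
      using t1i t2i unfolding g_def by (intro CollectI exI[of _ "[t1, t2]"]) auto
    then show ?thesis unfolding prog_len_def by (rule Inf_lower[THEN order_trans]) (simp add: numeral_eq_enat)
  qed
  have ge3: "3 \<le> prog_len g (alt_group A n \<inter> instructions A n)"
    unfolding prog_len_def
  proof (rule Inf_greatest)
    fix x assume "x \<in> {enat (length gs) | gs. set gs \<subseteq> alt_group A n \<inter> instructions A n \<and> foldr (\<circ>) gs id = g}"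
    then obtain gs where gs: "set gs \<subseteq> alt_group A n \<inter> instructions A n" "foldr (\<circ>) gs id = g"
      and xg: "x = enat (length gs)" by blast
    show "3 \<le> x" unfolding xg
    proof (rule ccontr)
      assume "\<not> 3 \<le> enat (length gs)"
      then have "length gs < 3" by (simp add: numeral_eq_enat)
      then consider "gs = []" | h where "gs = [h]" | h2 h1 where "gs = [h2, h1]"
        by (cases gs; cases "tl gs"; auto)
      then show False
      proof cases
        case 1
        then have "g = id" using gs by simp
        then show False using gp dist by simp
      next
        case 2
        then have "h = g" using gs by simp
        moreover have "h \<in> instructions A n" using 2 gs by auto
        ultimately obtain j where "\<forall>x\<in>C. \<forall>k<n. k \<noteq> j \<longrightarrow> g x ! k = x ! k"
          unfolding instructions_def C_def by auto
        then show False using notonly by blast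
      next
        case 3
        then have g21: "g = h2 \<circ> h1" using gs by simp
        have "h1 \<in> instructions A n" "h2 \<in> instructions A n" "h1 \<in> alt_group A n"
          using 3 gs by auto
        then obtain i j where h1p: "h1 permutes C" and h2p: "h2 permutes C"
          and o1: "\<forall>x\<in>C. \<forall>k<n. k \<noteq> i \<longrightarrow> h1 x ! k = x ! k"
          and o2: "\<forall>x\<in>C. \<forall>k<n. k \<noteq> j \<longrightarrow> h2 x ! k = x ! k"
          and ev1: "evenperm h1"
          unfolding instructions_def alt_group_def C_def by blast
        have h1C: "h1 x \<in> C" if "x \<in> C" for x using permutes_in_image[OF h1p] that by blast
        have gk: "g x ! k = x ! k" if "x \<in> C" "k < n" "k \<noteq> i" "k \<noteq> j" for x k
          using that o1 o2 h1C g21 by simp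
        have i01: "i = 0 \<or> i = 1" and ij: "i \<noteq> j"
        proof -
          have "i = 1 \<or> j = 1" using gk[of p 1] inC n1 gp nth ab(3) by auto
          moreover have "i = 0 \<or> j = 0" using gk[of q 0] inC n0 gq nth ab(3) by auto
          ultimately show "i = 0 \<or> i = 1" "i \<noteq> j" by auto
        qed
        have key: "h1 x = x[i := g x ! i]" if "x \<in> C" for x
          using only_coord_eq[OF h1p[unfolded C_def] h2p[unfolded C_def] o1[unfolded C_def] o2[unfolded C_def] ij that[unfolded C_def]] g21 by simp
        show False
        proof (cases "i = 0")
          case True
          have "h1 q = s" using key[OF inC(2)] True gq nth unfolding q_def s_def p_def
            by (simp add: list_update_swap)
          moreover have "h1 s = s" using key[OF inC(4)] True gsS nth by (metis list_update_id)
          ultimately show False using permutes_inj[OF h1p] dist by (metis injD)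
        next
          case False
          then have i1: "i = 1" using i01 by simp
          have "h1 = t2"
          proof
            fix x
            show "h1 x = t2 x"
            proof (cases "x \<in> C")
              case False
              then show ?thesis using permutes_not_in[OF h1p] permutes_not_in[OF t2p] by metis
            next
              case xC: True
              have hx: "h1 x = x[1 := g x ! 1]" using key[OF xC] i1 by simp
              consider "x = p" | "x = q" | "x = r" | "x \<noteq> p \<and> x \<noteq> q \<and> x \<noteq> r" by blast
              then show ?thesis
              proof cases
                case 1 then show ?thesis using hx gp n1 unfolding t2_def by (simp add: q_def p_def)
              next
                case 2
                have pa: "p[1 := a] = p" using nth(2) by (metis list_update_id)
                from 2 show ?thesis using hx gq nth pa unfolding t2_def
                  by (simp add: q_def)
              next
                case 3
                have ra: "r[1 := a] = r" using nth(6) by (metis list_update_id)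
                from 3 show ?thesis using ra using hx gr nth dist unfolding t2_def
                  by (simp add: transpose_def)
              next
                case 4 then show ?thesis using hx gother[of x] unfolding t2_def
                  by (simp add: transpose_def)
              qed
            qed
          qed
          then show False using ev1 dist unfolding t2_def by (simp add: evenperm_swap)
        qed
      qed
    qed
  qed
  show ?thesis
  proof (intro bexI[OF _ galt])
    show "prog_len g (alt_group A n \<inter> instructions A n) \<noteq> prog_len g (instructions A n)"
      using le2 ge3 by (cases "prog_len g (instructions A n)"; cases "prog_len g (alt_group A n \<inter> instructions A n)") (auto simp: numeral_eq_enat)
  qed
qed

end
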